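(* Let $n,m\ge1$, $V_{th}>0$, $\mathbf{W}\in\mathbb{R}^{n\times n}$, $\mathbf{F}\in\mathbb{R}^{n\times m}$, $\mathbf{b}\in\mathbb{R}^n$, and let $(\mathbf{x}[t])_{t\ge0}$ be inputs in $\mathbb{R}^m$. Consider the discrete feedback spiking neural network with the integrate-and-fire model: $\mathbf{u}[0]=\mathbf{0}$, $\mathbf{s}[0]=\mathbf{0}$, and for $t\ge0$ $$\mathbf{u}[t+\tfrac12]=\mathbf{u}[t]+\mathbf{W}\mathbf{s}[t]+\mathbf{F}\mathbf{x}[t]+\mathbf{b},\quad \mathbf{s}[t+1]=H(\mathbf{u}[t+\tfrac12]-V_{th}),\quad \mathbf{u}[t+1]=\mathbf{u}[t+\tfrac12]-V_{th}\mathbf{s}[t+1],$$ with $H$ the elementwise Heaviside step function. Define the average firing rates $\mathbf{a}[t]=\frac1t\sum_{\tau=1}^t\mathbf{s}[\tau]$ and the average inputs $\overline{\mathbf{x}}[t]=\frac{1}{t+1}\sum_{\tau=0}^t\mathbf{x}[\tau]$. Let $\mathbf{u}^+[t]\in\mathbb{R}^n$ denote the part of the membrane potential for which $$\mathbf{a}[t+1]=\sigma\!\left(\frac1{V_{th}}\left(\frac{t}{t+1}\mathbf{W}\mathbf{a}[t]+\mathbf{F}\overline{\mathbf{x}}[t]+\mathbf{b}-\frac{\mathbf{u}^+[t+1]}{t+1}\right)\right)$$ holds for all $t$. Suppose $\overline{\mathbf{x}}[t]\to\mathbf{x}^*$, and there exist constants $c$ and $\gamma<1$ such that $|\mathbf{u}^+_i[t]|\le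 c$ for all $i,t$ and $\|\mathbf{W}\|_2\le\gamma V_{th}$. Then $\mathbf{a}[t]$ converges to a point $\mathbf{a}^*$ satisfying $$\mathbf{a}^*=\sigma\!\left(\frac1{V_{th}}\left(\mathbf{W}\mathbf{a}^*+\mathbf{F}\mathbf{x}^*+\mathbf{b}\right)\right).$$
   Context: $\sigma$ is applied elementwise with $\sigma(x)=1$ for $x>1$, $\sigma(x)=x$ for $0\le x\le1$, $\sigma(x)=0$ for $x<0$. $\|\cdot\|_2$ is the spectral norm. In the paper $\mathbf{u}_i[t]=\mathbf{u}^-_i[t]+\mathbf{u}^+_i[t]$ where $\frac1t\mathbf{u}^-_i[t]=\min(\max(v_i[t]-V_{th},0),v_i[t])$ (with $v[t]$ the argument $\frac{t-1}{t}\mathbf{W}\mathbf{a}[t-1]+\mathbf{F}\overline{\mathbf{x}}[t-1]+\mathbf{b}$) collects the negative and excess positive terms, and $\mathbf{u}^+[t]$ is the remainder; with this decomposition the displayed relation holds. *)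

theory Defs
  imports "HOL-Analysis.Analysis"
begin

text \<open>Heaviside step function (convention H(0) = 1: a neuron fires when u >= V_th).\<close>
definition heaviside :: "real \<Rightarrow> real" where
  "heaviside x = (if x \<ge> 0 then 1 else 0)"

definition sigma :: "real \<Rightarrow> real" where
  "sigma x = (if x > 1 then 1 else if x < 0 then 0 else x)"

definition heavisidev :: "real ^ 'n \<Rightarrow> real ^ 'n" where
  "heavisidev v = (\<chi> i. heaviside (v $ i))"

definition sigmav :: "real ^ 'n \<Rightarrow> real ^ 'n" where
  "sigmav v = (\<chi> i. sigma (v $ i))"

definition avg_rate :: "(nat \<Rightarrow> real ^ 'n) \<Rightarrow> nat \<Rightarrow> real ^ 'n" where
  "avg_rate s t = (1 / real t) *\<^sub>R (\<Sum>\<tau>=1..t. s \<tau>)"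

definition avg_input :: "(nat \<Rightarrow> real ^ 'm) \<Rightarrow> nat \<Rightarrow> real ^ 'm" where
  "avg_input x t = (1 / real (t + 1)) *\<^sub>R (\<Sum>\<tau>=0..t. x \<tau>)"

end

theory Submission
  imports Defs
begin

lemma sigma_lip: "\<bar>sigma p - sigma q\<bar> \<le> \<bar>p - q\<bar>"
  unfolding sigma_def by auto

lemma sigmav_lip: "norm (sigmav x - sigmav y) \<le> norm (x - y)"
  by (rule norm_le_componentwise_cart) (simp add: sigmav_def sigma_lip)

lemma sigma_range: "0 \<le> sigma p \<and> sigma p \<le> 1"
  unfolding sigma_def by auto

lemma rec_lim:
  fixes d e :: "nat \<Rightarrow> real" and g :: real
  assumes d0: "\<And>t. d t \<ge> 0" and g0: "0 \<le> g" and g1: "g < 1"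
    and rec: "\<And>t. d (Suc t) \<le> g * d t + e t" and e: "e \<longlonglongrightarrow> 0"
  shows "d \<longlonglongrightarrow> 0"
proof (rule LIMSEQ_I)
  fix r :: real assume r: "0 < r"
  have "r * (1 - g) / 2 > 0" using r g1 by simp
  then obtain N where N: "\<And>n. n \<ge> N \<Longrightarrow> norm (e n) < r * (1 - g) / 2"
    using LIMSEQ_D[OF e] by (metis diff_zero)
  have ind: "d (N + k) \<le> g ^ k * d N + r / 2" for k
  proof (induction k)
    case 0 then show ?case using r by simp
  next
    case (Suc k)
    have "d (N + Suc k) \<le> g * d (N + k) + e (N + k)" using rec[of "N+k"] by simp
    also have "\<dots> \<le> g * (g ^ k * d N + r / 2) + r * (1 - g) / 2"
      using Suc g0 N[of "N+k"] by (intro add_mono mult_left_mono) auto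
    also have "\<dots> = g ^ Suc k * d N + r / 2" by (simp add: algebra_simps diff_divide_distrib)
    finally show ?case .
  qed
  have "(\<lambda>k. g ^ k * d N) \<longlonglongrightarrow> 0"
    by (rule tendsto_mult_left_zero, rule LIMSEQ_power_zero) (use g0 g1 in auto)
  then obtain M where M: "\<And>k. k \<ge> M \<Longrightarrow> norm (g ^ k * d N) < r / 2"
    using LIMSEQ_D[of _ 0 "r/2"] r by (metis diff_zero half_gt_zero)
  show "\<exists>no. \<forall>n\<ge>no. norm (d n - 0) < r"
  proof (intro exI allI impI)
    fix n assume n: "n \<ge> N + M"
    define k where "k = n - N"
    have k: "n = N + k" "k \<ge> M" using n by (auto simp: k_def)
    have "d n \<le> g ^ k * d N + r / 2" using ind k by simp
    moreover have "g ^ k * d N < r / 2" using M[OF k(2)] by simp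
    ultimately show "norm (d n - 0) < r" using d0[of n] by simp
  qed
qed

theorem theorem2:
  fixes W :: "real ^ 'n ^ 'n" and F :: "real ^ 'm ^ 'n" and b :: "real ^ 'n"
    and x :: "nat \<Rightarrow> real ^ 'm" and Vth :: real
    and u s up :: "nat \<Rightarrow> real ^ 'n"
    and xstar :: "real ^ 'm" and c \<gamma> :: real
  assumes Vth_pos: "Vth > 0"
    and u0: "u 0 = 0" and s0: "s 0 = 0"
    and s_step: "\<And>t. s (Suc t) = heavisidev (u t + W *v s t + F *v x t + b - (\<chi> i. Vth))"
    and u_step: "\<And>t. u (Suc t) = (u t + W *v s t + F *v x t + b) - Vth *\<^sub>R s (Suc t)"
    and up_rel: "\<And>t. avg_rate s (t + 1) =
        sigmav ((1 / Vth) *\<^sub>R ((real t / real (t + 1)) *\<^sub>R (W *v avg_rate s t)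
                 + F *v avg_input x t + b - (1 / real (t + 1)) *\<^sub>R up (t + 1)))"
    and xbar_lim: "avg_input x \<longlonglongrightarrow> xstar"
    and up_bound: "\<And>i t. \<bar>up t $ i\<bar> \<le> c"
    and gamma_lt: "\<gamma> < 1"
    and W_norm: "onorm (\<lambda>v. W *v v) \<le> \<gamma> * Vth"
  shows "\<exists>astar. avg_rate s \<longlonglongrightarrow> astar \<and>
           astar = sigmav ((1 / Vth) *\<^sub>R (W *v astar + F *v xstar + b))"
proof -
  define K where "K = 1 / Vth"
  define a where "a = avg_rate s"
  have K0: "K > 0" using Vth_pos by (simp add: K_def)
  have onn: "onorm (\<lambda>v. W *v v) \<ge> 0" by (rule onorm_pos_le) simp
  hence gV: "0 \<le> \<gamma> * Vth" using W_norm by linarith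
  hence g0: "\<gamma> \<ge> 0" using Vth_pos by (simp add: zero_le_mult_iff)
  have Wb: "norm (W *v v) \<le> \<gamma> * Vth * norm v" for v
  proof -
    have "norm (W *v v) \<le> onorm (\<lambda>v. W *v v) * norm v" by (rule onorm) simp
    also have "\<dots> \<le> \<gamma> * Vth * norm v" by (rule mult_right_mono[OF W_norm norm_ge_zero])
    finally show ?thesis .
  qed
  have KW: "K * norm (W *v v) \<le> \<gamma> * norm v" for v
  proof -
    have "K * norm (W *v v) \<le> K * (\<gamma> * Vth * norm v)" using Wb K0 by (simp add: mult_left_mono)
    also have "\<dots> = \<gamma> * norm v" using Vth_pos by (simp add: K_def)
    finally show ?thesis .
  qed
  define T where "T = (\<lambda>v. sigmav (K *\<^sub>R (W *v v + F *v xstar + b)))"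
  have "\<forall>p q. dist (T p) (T q) \<le> \<gamma> * dist p q"
  proof (intro allI)
    fix p q
    have "dist (T p) (T q) \<le> norm (K *\<^sub>R (W *v p + F *v xstar + b) - K *\<^sub>R (W *v q + F *v xstar + b))"
      unfolding T_def dist_norm by (rule sigmav_lip)
    also have "\<dots> = K * norm (W *v (p - q))" using K0
      by (simp add: matrix_vector_mult_diff_distrib algebra_simps flip: scaleR_diff_right)
    also have "\<dots> \<le> \<gamma> * dist p q" using KW by (simp add: dist_norm)
    finally show "dist (T p) (T q) \<le> \<gamma> * dist p q" .
  qed
  then obtain astar where fixp: "T astar = astar" using banach_fix_type[OF g0 gamma_lt] by blast
  have arange: "0 \<le> a t $ i \<and> a t $ i \<le> 1" for t i
  proof (cases t)
    case 0 then show ?thesis by (simp add: a_def avg_rate_def)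
  next
    case (Suc k) then show ?thesis using up_rel[of k] sigma_range
      by (simp add: a_def sigmav_def)
  qed
  have abound: "norm (a t) \<le> real CARD('n)" for t
  proof -
    have "norm (a t) \<le> (\<Sum>i\<in>UNIV. \<bar>a t $ i\<bar>)" by (rule norm_le_l1_cart)
    also have "\<dots> \<le> (\<Sum>i\<in>(UNIV::'n set). 1)" using arange by (intro sum_mono) auto
    finally show ?thesis by simp
  qed
  have upbound: "norm (up t) \<le> real CARD('n) * c" for t
  proof -
    have "norm (up t) \<le> (\<Sum>i\<in>UNIV. \<bar>up t $ i\<bar>)" by (rule norm_le_l1_cart)
    also have "\<dots> \<le> (\<Sum>i\<in>(UNIV::'n set). c)" using up_bound by (intro sum_mono) auto
    finally show ?thesis by simp
  qed
  define r where "r = (\<lambda>t. F *v (avg_input x t - xstar) - (1 / real (t + 1)) *\<^sub>R (W *v a t)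
       - (1 / real (t + 1)) *\<^sub>R up (t + 1))"
  define e where "e = (\<lambda>t. K * norm (r t))"
  define d where "d = (\<lambda>t. norm (a t - astar))"
  have r0: "r \<longlonglongrightarrow> 0"
  proof -
    have f1: "(\<lambda>t. F *v (avg_input x t - xstar)) \<longlonglongrightarrow> 0"
    proof -
      have "(\<lambda>t. avg_input x t - xstar) \<longlonglongrightarrow> 0" using xbar_lim by (simp add: LIM_zero)
      from bounded_linear.tendsto[OF matrix_vector_mul_bounded_linear[of F] this] show ?thesis by simp
    qed
    have inv0: "(\<lambda>t. 1 / real (t + 1)) \<longlonglongrightarrow> 0"
      using LIMSEQ_Suc[OF lim_inverse_n'] by simp
    have f2: "(\<lambda>t. (1 / real (t + 1)) *\<^sub>R (W *v a t)) \<longlonglongrightarrow> 0"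
    proof (rule Lim_null_comparison)
      show "\<forall>\<^sub>F t in sequentially. norm ((1 / real (t + 1)) *\<^sub>R (W *v a t)) \<le> (1 / real (t + 1)) * (\<gamma> * Vth * real CARD('n))"
      proof (intro always_eventually allI)
        fix t
        have "norm (W *v a t) \<le> \<gamma> * Vth * real CARD('n)"
          using Wb[of "a t"] mult_left_mono[OF abound[of t] gV] by linarith
        then show "norm ((1 / real (t + 1)) *\<^sub>R (W *v a t)) \<le> (1 / real (t + 1)) * (\<gamma> * Vth * real CARD('n))"
          by (simp add: divide_right_mono)
      qed
      show "(\<lambda>t. 1 / real (t + 1) * (\<gamma> * Vth * real CARD('n))) \<longlonglongrightarrow> 0"
        using tendsto_mult_left_zero[OF inv0] by simp
    qed
    have f3: "(\<lambda>t. (1 / real (t + 1)) *\<^sub>R up (t + 1)) \<longlonglongrightarrow> 0"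
    proof (rule Lim_null_comparison)
      show "\<forall>\<^sub>F t in sequentially. norm ((1 / real (t + 1)) *\<^sub>R up (t + 1)) \<le> (1 / real (t + 1)) * (real CARD('n) * c)"
        using upbound by (intro always_eventually allI) (simp add: divide_right_mono)
      show "(\<lambda>t. 1 / real (t + 1) * (real CARD('n) * c)) \<longlonglongrightarrow> 0"
        using tendsto_mult_left_zero[OF inv0] by simp
    qed
    show ?thesis unfolding r_def using tendsto_diff[OF tendsto_diff[OF f1 f2] f3] by simp
  qed
  have e0: "e \<longlonglongrightarrow> 0" unfolding e_def
    using tendsto_mult_right_zero[OF tendsto_norm_zero[OF r0]] by simp
  have rec: "d (Suc t) \<le> \<gamma> * d t + e t" for t
  proof -
    have eq: "(real t / real (t + 1)) *\<^sub>R (W *v a t) + F *v avg_input x t + b - (1 / real (t + 1)) *\<^sub>R up (t + 1)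
        - (W *v astar + F *v xstar + b) = W *v (a t - astar) + r t"
    proof -
      have "(real t / real (t + 1)) *\<^sub>R (W *v a t) = W *v a t - (1 / real (t + 1)) *\<^sub>R (W *v a t)"
      proof -
        have h: "real t / real (t + 1) = 1 - 1 / real (t + 1)" by (simp add: field_simps)
        show ?thesis unfolding h scaleR_diff_left by simp
      qed
      then show ?thesis unfolding r_def
        by (simp add: matrix_vector_mult_diff_distrib algebra_simps)
    qed
    have "d (Suc t) = norm (sigmav (K *\<^sub>R ((real t / real (t + 1)) *\<^sub>R (W *v a t) + F *v avg_input x t + b - (1 / real (t + 1)) *\<^sub>R up (t + 1)))
        - sigmav (K *\<^sub>R (W *v astar + F *v xstar + b)))"
      using up_rel[of t] fixp unfolding d_def a_def T_def K_def by simp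
    also have "\<dots> \<le> norm (K *\<^sub>R ((real t / real (t + 1)) *\<^sub>R (W *v a t) + F *v avg_input x t + b - (1 / real (t + 1)) *\<^sub>R up (t + 1))
        - K *\<^sub>R (W *v astar + F *v xstar + b))" by (rule sigmav_lip)
    also have "\<dots> = norm (K *\<^sub>R (W *v (a t - astar) + r t))"
      by (simp only: scaleR_diff_right[symmetric] eq)
    also have "\<dots> = K * norm (W *v (a t - astar) + r t)"
      using K0 by simp
    also have "\<dots> \<le> K * norm (W *v (a t - astar)) + K * norm (r t)"
      using K0 by (simp add: norm_triangle_ineq flip: distrib_left)
    also have "\<dots> \<le> \<gamma> * d t + e t" using KW unfolding d_def e_def by simp
    finally show ?thesis .
  qed
  have "d \<longlonglongrightarrow> 0" by (rule rec_lim[OF _ g0 gamma_lt rec e0]) (simp add: d_def)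
  hence "a \<longlonglongrightarrow> astar" unfolding d_def using tendsto_norm_zero_iff LIM_zero_cancel by blast
  then show ?thesis using fixp unfolding a_def T_def K_def by auto
qed

end
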